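(* (Model B) Let $u\in\mathbb{R}^d$. For all sufficiently small $\beta>0$, every finite $\Lambda\subset\mathbb{Z}^d$ and every $\omega$ for which the bounds $As^2-B^\omega_{(x,y)}\le V^\omega_{(x,y)}(s)\le C_2s^2$ hold, $$F_{\beta,u,\Lambda}[\omega_\Lambda]\le-|\Lambda|\big(\sigma^{A-\beta}_\Lambda-\sigma^{C_2}_\Lambda\big)+\sum_{x,y\in\Lambda\cup\partial\Lambda,|x-y|=1}B^\omega_{(x,y)}-\frac{A-\beta-C_2}{2}\sum_{x,y\in\Lambda\cup\partial\Lambda,|x-y|=1}((x-y)\cdot u)^2.$$
   Context: Model B: for each nearest-neighbour bond $(x,y)$ of $\mathbb{Z}^d$ there is a random function $V^\omega_{(x,y)}:\mathbb{R}\to\mathbb{R}$, jointly measurable in $(\omega,s)$, i.i.d. over bonds, and for each $\omega$, $V^\omega_{(x,y)}\in C^2(\mathbb{R})$ is even. $(B^\omega_{(x,y)})$ are i.i.d. real random variables with $\mathbb{E}|B_{(x,y)}|<\infty$, and for $\mathbb P$-a.e. $\omega$, $As^2-B^\omega_{(x,y)}\le V^\omega_{(x,y)}(s)\le C_2s^2$ for all $s$ and all bonds (fixed $A,C_2>0$). For finite $\Lambda$, $\partial\Lambda=\{x\notin\Lambda:\|x-y\|_1=1\text{ for some }y\in\Lambda\}$; sums over "$x,y$ with $|x-y|=1$" are over ordered nearest-neighbour pairs. For $\psi\in\mathbb{R}^{\mathbb{Z}^d}$, $H^\psi_\Lambda[\omega](\phi)=\frac12\sum_{x,y\in\Lambda,|x-y|=1}V^\omega_{(x,y)}(\phi(x)-\phi(y))+\sum_{x\in\Lambda,y\in\partial\Lambda,|x-y|=1}V^\omega_{(x,y)}(\phi(x)-\psi(y))$,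 and $\nu^\psi_\Lambda[\omega](\mathrm{d}\phi)=\frac1Ze^{-H^\psi_\Lambda[\omega](\phi)}\prod_{x\in\Lambda}\mathrm{d}\phi(x)\prod_{x\notin\Lambda}\delta_{\psi(x)}(\mathrm{d}\phi(x))$. With $\psi_u(x)=x\cdot u$, $$F_{\beta,u,\Lambda}[\omega_\Lambda]=\log\int\nu^{\psi_u}_\Lambda[\omega](\mathrm{d}\phi)\exp\Big(\frac\beta2\sum_{x,y\in\mathbb{Z}^d,|x-y|=1}(\phi(x)-\phi(y)-u\cdot(x-y))^2\Big).$$ For $c>0$, $\sigma^c_\Lambda=-\frac1{|\Lambda|}\log\int_{\mathbb{R}^\Lambda}\exp\big(-\frac c2\sum_{x,y\in\Lambda,|x-y|=1}(\phi(x)-\phi(y))^2-c\sum_{x\in\Lambda,y\in\partial\Lambda,|x-y|=1}\phi(x)^2\big)\prod_{x\in\Lambda}\mathrm{d}\phi(x)$ (the surface tension of the nonrandom model with potential $V(s)=cs^2$, tilt $0$). *)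

theory Defs
  imports "HOL-Probability.Probability"
begin

type_synonym 'd site = "int ^ 'd"

definition nn :: "'d::finite site \<Rightarrow> 'd site \<Rightarrow> bool" where
  "nn x y \<longleftrightarrow> (\<Sum>i\<in>UNIV. \<bar>x $ i - y $ i\<bar>) = 1"

definition bdry :: "'d::finite site set \<Rightarrow> 'd site set" where
  "bdry \<Lambda> = {x. x \<notin> \<Lambda> \<and> (\<exists>y\<in>\<Lambda>. nn x y)}"

definition sdot :: "'d::finite site \<Rightarrow> real ^ 'd \<Rightarrow> real" where
  "sdot x u = (\<Sum>i\<in>UNIV. real_of_int (x $ i) * u $ i)"

definition psi_tilt :: "real ^ 'd \<Rightarrow> 'd::finite site \<Rightarrow> real" where
  "psi_tilt u x = sdot x u"

definition ext_cfg :: "'d::finite site set \<Rightarrow> ('d site \<Rightarrow> real) \<Rightarrow> ('d site \<Rightarrow> real) \<Rightarrow> 'd site \<Rightarrow> real" where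
  "ext_cfg \<Lambda> \<psi> \<phi> x = (if x \<in> \<Lambda> then \<phi> x else \<psi> x)"

abbreviation leb_on :: "'d::finite site set \<Rightarrow> ('d site \<Rightarrow> real) measure" where
  "leb_on \<Lambda> \<equiv> PiM \<Lambda> (\<lambda>_. lborel)"

text \<open>Hamiltonian H^psi_Lambda (V is the family of bond potentials for a fixed omega);
  sums are over ordered nearest-neighbour pairs.\<close>
definition Ham :: "('d::finite site \<Rightarrow> 'd site \<Rightarrow> real \<Rightarrow> real) \<Rightarrow> 'd site set
    \<Rightarrow> ('d site \<Rightarrow> real) \<Rightarrow> ('d site \<Rightarrow> real) \<Rightarrow> real" where
  "Ham V \<Lambda> \<psi> \<phi> =
     (1/2) * (\<Sum>(x,y)\<in>{(x,y). x \<in> \<Lambda> \<and> y \<in> \<Lambda> \<and> nn x y}. V x y (\<phi> x - \<phi> y))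
     + (\<Sum>(x,y)\<in>{(x,y). x \<in> \<Lambda> \<and> y \<in> bdry \<Lambda> \<and> nn x y}. V x y (\<phi> x - \<psi> y))"

text \<open>F_{beta,u,Lambda}[omega_Lambda] = log of the expectation under nu^{psi_u}_Lambda of
  exp(beta/2 * sum over all ordered nn pairs of Z^d of (phi(x)-phi(y)-u.(x-y))^2).\<close>
definition Ffun :: "('d::finite site \<Rightarrow> 'd site \<Rightarrow> real \<Rightarrow> real) \<Rightarrow> real \<Rightarrow> real ^ 'd
    \<Rightarrow> 'd site set \<Rightarrow> real" where
  "Ffun V \<beta> u \<Lambda> =
     (let \<psi> = psi_tilt u;
          Z = (\<integral>\<phi>. exp (- Ham V \<Lambda> \<psi> \<phi>) \<partial>leb_on \<Lambda>);
          N = (\<integral>\<phi>. exp (- Ham V \<Lambda> \<psi> \<phi>) *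
                 exp (\<beta> / 2 * (\<Sum>\<^sub>\<infinity>(x,y)\<in>{(x,y). nn x y}.
                   (ext_cfg \<Lambda> \<psi> \<phi> x - ext_cfg \<Lambda> \<psi> \<phi> y - sdot (x - y) u)\<^sup>2)) \<partial>leb_on \<Lambda>)
      in ln (N / Z))"

text \<open>Surface tension sigma^c_Lambda of the Gaussian model V(s) = c s^2 at tilt 0.\<close>
definition sigma :: "real \<Rightarrow> 'd::finite site set \<Rightarrow> real" where
  "sigma c \<Lambda> = - (1 / real (card \<Lambda>)) * ln (\<integral>\<phi>.
      exp (- (c/2) * (\<Sum>(x,y)\<in>{(x,y). x \<in> \<Lambda> \<and> y \<in> \<Lambda> \<and> nn x y}. (\<phi> x - \<phi> y)\<^sup>2)
           - c * (\<Sum>(x,y)\<in>{(x,y). x \<in> \<Lambda> \<and> y \<in> bdry \<Lambda> \<and> nn x y}. (\<phi> x)\<^sup>2)) \<partial>leb_on \<Lambda>)"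

definition C2_fun :: "(real \<Rightarrow> real) \<Rightarrow> bool" where
  "C2_fun f \<longleftrightarrow> (\<exists>f' f''. (\<forall>s. (f has_real_derivative f' s) (at s)) \<and>
      (\<forall>s. (f' has_real_derivative f'' s) (at s)) \<and> continuous_on UNIV f'')"

end

theory Submission
  imports Defs
begin

lemma nn_sym: "nn x y = nn y x"
  unfolding nn_def by (simp add: abs_minus_commute)

lemma nn_abs: "nn x y \<Longrightarrow> \<bar>x $ i - y $ i\<bar> \<le> 1"
proof -
  assume "nn x y"
  hence "(\<Sum>j\<in>UNIV. \<bar>x $ j - y $ j\<bar>) = 1" by (simp add: nn_def)
  moreover have "\<bar>x $ i - y $ i\<bar> \<le> (\<Sum>j\<in>UNIV. \<bar>x $ j - y $ j\<bar>)"
    by (rule member_le_sum) auto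
  ultimately show ?thesis by simp
qed

lemma finite_box: "finite {y::int^'d::finite. \<forall>i. y $ i \<in> S i}" if "\<And>i. finite (S i)"
proof -
  have "{y::int^'d. \<forall>i. y $ i \<in> S i} \<subseteq> vec_lambda ` (PiE UNIV S)"
  proof
    fix y :: "int^'d" assume "y \<in> {y. \<forall>i. y $ i \<in> S i}"
    hence "(\<lambda>i. y $ i) \<in> PiE UNIV S" by auto
    moreover have "y = vec_lambda (\<lambda>i. y $ i)" by simp
    ultimately show "y \<in> vec_lambda ` (PiE UNIV S)" by blast
  qed
  moreover have "finite (PiE UNIV S)" using that by (intro finite_PiE) auto
  ultimately show ?thesis by (meson finite_surj)
qed

lemma finite_nbr: "finite {y. nn x y}"
proof -
  have "{y. nn x y} \<subseteq> {y. \<forall>i. y $ i \<in> {x$i - 1 .. x$i + 1}}"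
  proof
    fix y assume "y \<in> {y. nn x y}"
    hence "\<bar>y $ i - x $ i\<bar> \<le> 1" for i using nn_abs nn_sym by blast
    thus "y \<in> {y. \<forall>i. y $ i \<in> {x$i - 1 .. x$i + 1}}" by (simp add: abs_le_iff) (smt (verit))
  qed
  thus ?thesis using finite_box[of "\<lambda>i. {x$i - 1 .. x$i + 1}"] finite_subset by auto
qed

lemma finite_bdry: "finite \<Lambda> \<Longrightarrow> finite (bdry \<Lambda>)"
proof -
  assume "finite \<Lambda>"
  have "bdry \<Lambda> \<subseteq> (\<Union>y\<in>\<Lambda>. {x. nn y x})" unfolding bdry_def using nn_sym by auto
  thus ?thesis using \<open>finite \<Lambda>\<close> finite_nbr finite_subset by blast
qed

lemma sdot_diff: "sdot (x - y) u = sdot x u - sdot y u"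
  unfolding sdot_def by (simp add: sum_subtractf left_diff_distrib)

lemma sdot_minus: "sdot (- x) u = - sdot x u"
  unfolding sdot_def by (simp add: sum_negf)

lemma sum_nbr_zero: "(\<Sum>y\<in>{y. nn x y}. sdot (x - y) u) = 0"
proof -
  let ?N = "{y. nn x y}"
  define r where "r = (\<lambda>y. x + x - y)"
  let ?r = r
  have rn: "nn x (?r y) = nn x y" for y unfolding nn_def r_def by (simp add: abs_minus_commute)
  have "(\<Sum>y\<in>?N. sdot (x - y) u) = (\<Sum>y\<in>?N. sdot (x - ?r y) u)"
    by (rule sum.reindex_bij_witness[of _ ?r ?r]) (auto simp: rn, auto simp: r_def)
  also have "\<dots> = - (\<Sum>y\<in>?N. sdot (x - y) u)"
    by (simp add: sum_negf[symmetric] sdot_diff r_def)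
  finally show ?thesis by simp
qed

lemma pair_sum:
  assumes "finite P" "finite Q"
  shows "(\<Sum>(x,y)\<in>{(x,y). x\<in>P \<and> y\<in>Q \<and> R x y}. g x y) = (\<Sum>x\<in>P. \<Sum>y\<in>Q. if R x y then g x y else 0)"
proof -
  have "(\<Sum>(x,y)\<in>{(x,y). x\<in>P \<and> y\<in>Q \<and> R x y}. g x y) = (\<Sum>(x,y)\<in>P\<times>Q. if R x y then g x y else 0)"
    using assms by (intro sum.mono_neutral_cong_left) (auto split: if_splits)
  also have "\<dots> = (\<Sum>x\<in>P. \<Sum>y\<in>Q. if R x y then g x y else 0)"
    by (simp add: sum.cartesian_product)
  finally show ?thesis .
qed


definition TT :: "'d::finite site set \<Rightarrow> 'd site set" where "TT \<Lambda> = \<Lambda> \<union> bdry \<Lambda>"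
definition wt :: "'d::finite site set \<Rightarrow> 'd site \<Rightarrow> real" where
  "wt \<Lambda> y = (if y \<in> \<Lambda> then 1/2 else 1)"
definition PS :: "'d::finite site set \<Rightarrow> ('d site \<Rightarrow> 'd site \<Rightarrow> real) \<Rightarrow> real" where
  "PS \<Lambda> g = (\<Sum>x\<in>\<Lambda>. \<Sum>y\<in>TT \<Lambda>. if nn x y then wt \<Lambda> y * g x y else 0)"

lemma TT_nbr: "x \<in> \<Lambda> \<Longrightarrow> nn x y \<Longrightarrow> y \<in> TT \<Lambda>"
  unfolding TT_def bdry_def using nn_sym by auto

lemma finite_TT: "finite \<Lambda> \<Longrightarrow> finite (TT \<Lambda>)"
  by (simp add: TT_def finite_bdry)

lemma bdry_disj: "\<Lambda> \<inter> bdry \<Lambda> = {}" unfolding bdry_def by auto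

lemma sum_TT: "finite \<Lambda> \<Longrightarrow> (\<Sum>y\<in>TT \<Lambda>. h y) = (\<Sum>y\<in>\<Lambda>. h y) + (\<Sum>y\<in>bdry \<Lambda>. h y)"
  unfolding TT_def using finite_bdry[of \<Lambda>] bdry_disj[of \<Lambda>] by (intro sum.union_disjoint) auto

lemma sum_TT_nbr:
  assumes "finite \<Lambda>" "x \<in> \<Lambda>"
  shows "(\<Sum>y\<in>TT \<Lambda>. if nn x y then f y else 0) = (\<Sum>y\<in>{y. nn x y}. f y)"
proof -
  have "(\<Sum>y\<in>TT \<Lambda>. if nn x y then f y else 0) = (\<Sum>y\<in>{y. nn x y}. if nn x y then f y else 0)"
    using assms TT_nbr finite_TT finite_nbr by (intro sum.mono_neutral_cong_right) (auto split: if_splits)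
  thus ?thesis by simp
qed

lemma PS_split:
  assumes "finite \<Lambda>"
  shows "PS \<Lambda> h = (1/2) * (\<Sum>(x,y)\<in>{(x,y). x \<in> \<Lambda> \<and> y \<in> \<Lambda> \<and> nn x y}. h x y)
                  + (\<Sum>(x,y)\<in>{(x,y). x \<in> \<Lambda> \<and> y \<in> bdry \<Lambda> \<and> nn x y}. h x y)"
proof -
  have "PS \<Lambda> h = (\<Sum>x\<in>\<Lambda>. (\<Sum>y\<in>\<Lambda>. if nn x y then wt \<Lambda> y * h x y else 0)
                     + (\<Sum>y\<in>bdry \<Lambda>. if nn x y then wt \<Lambda> y * h x y else 0))"
    unfolding PS_def using assms by (simp add: sum_TT)
  also have "\<dots> = (\<Sum>x\<in>\<Lambda>. (1/2) * (\<Sum>y\<in>\<Lambda>. if nn x y then h x y else 0)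
                     + (\<Sum>y\<in>bdry \<Lambda>. if nn x y then h x y else 0))"
    by (intro sum.cong refl arg_cong2[where f="(+)"])
       (auto simp: wt_def sum_distrib_left bdry_def intro!: sum.cong)
  also have "\<dots> = (1/2) * (\<Sum>x\<in>\<Lambda>. \<Sum>y\<in>\<Lambda>. if nn x y then h x y else 0)
                  + (\<Sum>x\<in>\<Lambda>. \<Sum>y\<in>bdry \<Lambda>. if nn x y then h x y else 0)"
    by (simp add: sum.distrib sum_distrib_left)
  finally show ?thesis using assms by (simp add: pair_sum finite_bdry)
qed

lemma PS_lin: "PS \<Lambda> (\<lambda>x y. a * f x y + b * g x y) = a * PS \<Lambda> f + b * PS \<Lambda> g"
  unfolding PS_def sum_distrib_left sum.distrib[symmetric] by (intro sum.cong refl) (simp add: algebra_simps)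

lemma PS_add: "PS \<Lambda> (\<lambda>x y. f x y + g x y) = PS \<Lambda> f + PS \<Lambda> g"
  using PS_lin[of \<Lambda> 1 f 1 g] by simp

lemma PS_diff: "PS \<Lambda> (\<lambda>x y. f x y - g x y) = PS \<Lambda> f - PS \<Lambda> g"
  using PS_lin[of \<Lambda> 1 f "-1" g] by simp

lemma PS_scale: "PS \<Lambda> (\<lambda>x y. a * f x y) = a * PS \<Lambda> f"
  using PS_lin[of \<Lambda> a f 0 f] by simp

lemma PS_mono: "(\<And>x y. x \<in> \<Lambda> \<Longrightarrow> nn x y \<Longrightarrow> f x y \<le> g x y) \<Longrightarrow> PS \<Lambda> f \<le> PS \<Lambda> g"
  unfolding PS_def by (intro sum_mono) (auto simp: wt_def)

lemma PS_nonneg: "(\<And>x y. x \<in> \<Lambda> \<Longrightarrow> nn x y \<Longrightarrow> 0 \<le> f x y) \<Longrightarrow> 0 \<le> PS \<Lambda> f"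
  unfolding PS_def by (intro sum_nonneg) (auto simp: wt_def)

lemma swap_bdry:
  assumes "\<And>x y. nn x y \<Longrightarrow> g x y = g y x"
  shows "(\<Sum>x\<in>bdry \<Lambda>. \<Sum>y\<in>\<Lambda>. if nn x y then g x y else 0) = (\<Sum>x\<in>\<Lambda>. \<Sum>y\<in>bdry \<Lambda>. if nn x y then g x y else 0)"
  by (subst sum.swap) (intro sum.cong refl, auto simp: assms nn_sym)

lemma PS2:
  assumes "finite \<Lambda>" "\<And>x y. nn x y \<Longrightarrow> g x y = g y x"
  shows "2 * PS \<Lambda> g = (\<Sum>x\<in>\<Lambda>. \<Sum>y\<in>TT \<Lambda>. if nn x y then g x y else 0) + (\<Sum>x\<in>bdry \<Lambda>. \<Sum>y\<in>\<Lambda>. if nn x y then g x y else 0)"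
proof -
  have "2 * PS \<Lambda> g = (\<Sum>x\<in>\<Lambda>. \<Sum>y\<in>\<Lambda>. if nn x y then g x y else 0) + 2 * (\<Sum>x\<in>\<Lambda>. \<Sum>y\<in>bdry \<Lambda>. if nn x y then g x y else 0)"
    using assms(1) by (simp add: PS_split pair_sum finite_bdry)
  also have "\<dots> = (\<Sum>x\<in>\<Lambda>. \<Sum>y\<in>TT \<Lambda>. if nn x y then g x y else 0) + (\<Sum>x\<in>\<Lambda>. \<Sum>y\<in>bdry \<Lambda>. if nn x y then g x y else 0)"
    using assms(1) by (simp add: sum_TT sum.distrib)
  also have "\<dots> = (\<Sum>x\<in>\<Lambda>. \<Sum>y\<in>TT \<Lambda>. if nn x y then g x y else 0) + (\<Sum>x\<in>bdry \<Lambda>. \<Sum>y\<in>\<Lambda>. if nn x y then g x y else 0)"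
    by (simp only: swap_bdry[of g \<Lambda>, OF assms(2)])
  finally show ?thesis .
qed



lemma PS_expand:
  assumes fin: "finite \<Lambda>" and z: "\<And>x. x \<notin> \<Lambda> \<Longrightarrow> \<zeta> x = 0"
  shows "PS \<Lambda> (\<lambda>x y. (\<zeta> x - \<zeta> y + sdot (x - y) u)\<^sup>2)
       = PS \<Lambda> (\<lambda>x y. (\<zeta> x - \<zeta> y)\<^sup>2) + PS \<Lambda> (\<lambda>x y. (sdot (x - y) u)\<^sup>2)"
proof -
  define c where "c x y = sdot (x - y) u" for x y
  have cs: "c y x = - c x y" for x y unfolding c_def by (simp add: sdot_diff)
  define S1 where "S1 = (\<Sum>x\<in>\<Lambda>. \<Sum>y\<in>\<Lambda>. if nn x y then \<zeta> x * c x y else 0)"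
  define S2 where "S2 = (\<Sum>x\<in>\<Lambda>. \<Sum>y\<in>\<Lambda>. if nn x y then \<zeta> y * c x y else 0)"
  define S3 where "S3 = (\<Sum>x\<in>\<Lambda>. \<Sum>y\<in>bdry \<Lambda>. if nn x y then \<zeta> x * c x y else 0)"
  have "S2 = (\<Sum>y\<in>\<Lambda>. \<Sum>x\<in>\<Lambda>. if nn x y then \<zeta> y * c x y else 0)"
    unfolding S2_def by (rule sum.swap)
  also have "\<dots> = (\<Sum>y\<in>\<Lambda>. - (\<Sum>x\<in>\<Lambda>. if nn y x then \<zeta> y * c y x else 0))"
  proof (rule sum.cong[OF refl])
    fix y
    show "(\<Sum>x\<in>\<Lambda>. if nn x y then \<zeta> y * c x y else 0) = - (\<Sum>x\<in>\<Lambda>. if nn y x then \<zeta> y * c y x else 0)"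
      unfolding sum_negf[symmetric]
    proof (rule sum.cong[OF refl])
      fix x show "(if nn x y then \<zeta> y * c x y else 0) = - (if nn y x then \<zeta> y * c y x else 0)"
        using cs[of x y] nn_sym[of x y] by simp
    qed
  qed
  also have "\<dots> = - S1" unfolding S1_def by (simp add: sum_negf)
  finally have S21: "S2 = - S1" .
  have e1: "(\<Sum>x\<in>\<Lambda>. \<Sum>y\<in>\<Lambda>. if nn x y then (\<zeta> x - \<zeta> y) * c x y else 0) = S1 - S2"
    unfolding S1_def S2_def sum_subtractf[symmetric]
    by (intro sum.cong refl) (simp add: left_diff_distrib)
  have e2: "(\<Sum>x\<in>\<Lambda>. \<Sum>y\<in>bdry \<Lambda>. if nn x y then (\<zeta> x - \<zeta> y) * c x y else 0) = S3"
    unfolding S3_def by (intro sum.cong refl) (simp add: z bdry_def)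
  have L: "PS \<Lambda> (\<lambda>x y. (\<zeta> x - \<zeta> y) * c x y) = (1/2) * (S1 - S2) + S3"
    using fin by (simp only: PS_split pair_sum finite_bdry e1 e2)
  have "S1 + S3 = (\<Sum>x\<in>\<Lambda>. \<Sum>y\<in>TT \<Lambda>. if nn x y then \<zeta> x * c x y else 0)"
    unfolding S1_def S3_def using fin by (simp only: sum_TT sum.distrib)
  also have "\<dots> = (\<Sum>x\<in>\<Lambda>. \<zeta> x * (\<Sum>y\<in>TT \<Lambda>. if nn x y then c x y else 0))"
    by (intro sum.cong refl) (simp add: sum_distrib_left if_distrib if_distribR cong: if_cong)
  also have "\<dots> = 0"
    using fin by (simp add: sum_TT_nbr c_def sum_nbr_zero)
  finally have "PS \<Lambda> (\<lambda>x y. (\<zeta> x - \<zeta> y) * c x y) = 0" using L S21 by simp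
  moreover have "PS \<Lambda> (\<lambda>x y. (\<zeta> x - \<zeta> y + c x y)\<^sup>2)
       = PS \<Lambda> (\<lambda>x y. (\<zeta> x - \<zeta> y)\<^sup>2 + (c x y)\<^sup>2 + 2 * ((\<zeta> x - \<zeta> y) * c x y))"
    by (rule arg_cong[where f="PS \<Lambda>"]) (simp add: fun_eq_iff power2_eq_square algebra_simps)
  ultimately show ?thesis by (simp only: PS_add PS_scale c_def)
qed



lemma nn_axis: "nn x (x + axis i 1)"
proof -
  have "(\<Sum>j\<in>UNIV. \<bar>x $ j - (x + axis i 1) $ j\<bar>) = (\<Sum>j\<in>UNIV. if j = i then 1 else 0)"
    by (intro sum.cong refl) (simp add: axis_def)
  also have "\<dots> = 1" by simp
  finally show ?thesis by (simp add: nn_def)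
qed

lemma axis_add_int: "axis i (a::int) + axis i b = axis i (a + b)"
  by (simp add: vec_eq_iff axis_def)

lemma poincare:
  assumes fin: "finite \<Lambda>" and z: "\<And>x. x \<notin> \<Lambda> \<Longrightarrow> \<zeta> x = 0"
  shows "(\<Sum>x\<in>\<Lambda>. (\<zeta> x)\<^sup>2) \<le> real (card \<Lambda>) * 4 ^ card \<Lambda> * 4 * PS \<Lambda> (\<lambda>x y. (\<zeta> x - \<zeta> y)\<^sup>2)"
proof -
  define P where "P = PS \<Lambda> (\<lambda>x y. (\<zeta> x - \<zeta> y)\<^sup>2)"
  define i :: 'a where "i = undefined"
  define e where "e = axis i (1::int)"
  have P0: "0 \<le> P" unfolding P_def by (rule PS_nonneg) simp
  have single: "(\<zeta> x - \<zeta> (x + e))\<^sup>2 \<le> 2 * P" if "x \<in> \<Lambda>" for x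
  proof -
    have nx: "nn x (x + e)" unfolding e_def by (rule nn_axis)
    have T: "x + e \<in> TT \<Lambda>" using TT_nbr[OF that nx] .
    have "wt \<Lambda> (x + e) * (\<zeta> x - \<zeta> (x + e))\<^sup>2 = (if nn x (x + e) then wt \<Lambda> (x + e) * (\<zeta> x - \<zeta> (x + e))\<^sup>2 else 0)"
      using nx by simp
    also have "\<dots> \<le> (\<Sum>y\<in>TT \<Lambda>. if nn x y then wt \<Lambda> y * (\<zeta> x - \<zeta> y)\<^sup>2 else 0)"
      by (rule member_le_sum[OF T]) (auto simp: wt_def finite_TT fin)
    also have "\<dots> \<le> P" unfolding P_def PS_def
      by (rule member_le_sum[OF that, where f="\<lambda>x. \<Sum>y\<in>TT \<Lambda>. if nn x y then wt \<Lambda> y * (\<zeta> x - \<zeta> y)\<^sup>2 else 0"])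
         (auto simp: wt_def fin intro!: sum_nonneg)
    finally have "wt \<Lambda> (x + e) * (\<zeta> x - \<zeta> (x + e))\<^sup>2 \<le> P" .
    moreover have "1/2 \<le> wt \<Lambda> (x + e)" by (simp add: wt_def)
    ultimately show ?thesis
    proof -
      have "(1/2) * (\<zeta> x - \<zeta> (x + e))\<^sup>2 \<le> wt \<Lambda> (x + e) * (\<zeta> x - \<zeta> (x + e))\<^sup>2"
        using \<open>1/2 \<le> wt \<Lambda> (x + e)\<close> by (intro mult_right_mono) auto
      thus ?thesis using \<open>wt \<Lambda> (x + e) * (\<zeta> x - \<zeta> (x + e))\<^sup>2 \<le> P\<close> by linarith
    qed
  qed
  have ind: "\<forall>x. x + axis i (int k) \<notin> \<Lambda> \<longrightarrow> (\<zeta> x)\<^sup>2 \<le> 4 ^ k * (4 * P)" for k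
  proof (induction k)
    case 0
    then show ?case using z P0 by (simp add: axis_def zero_vec_def[symmetric])
  next
    case (Suc k)
    show ?case
    proof (intro allI impI)
      fix x assume nx: "x + axis i (int (Suc k)) \<notin> \<Lambda>"
      show "(\<zeta> x)\<^sup>2 \<le> 4 ^ Suc k * (4 * P)"
      proof (cases "x \<in> \<Lambda>")
        case False thus ?thesis using z P0 by simp
      next
        case True
        have "(x + e) + axis i (int k) = x + axis i (int (Suc k))"
          unfolding e_def by (simp add: add.assoc axis_add_int)
        hence "(x + e) + axis i (int k) \<notin> \<Lambda>" using nx by (simp only: not_False_eq_True)
        hence h: "(\<zeta> (x + e))\<^sup>2 \<le> 4 ^ k * (4 * P)" using Suc.IH by blast
        have s: "(\<zeta> x - \<zeta> (x + e))\<^sup>2 \<le> 2 * P" using single[OF True] .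
        have "(\<zeta> x)\<^sup>2 \<le> 2 * (\<zeta> x - \<zeta> (x + e))\<^sup>2 + 2 * (\<zeta> (x + e))\<^sup>2"
        proof -
          have "0 \<le> (\<zeta> x - 2 * \<zeta> (x + e))\<^sup>2" by simp
          thus ?thesis by (simp add: power2_eq_square algebra_simps)
        qed
        also have "\<dots> \<le> 4 * P + 2 * (4 ^ k * (4 * P))" using s h by simp
        also have "\<dots> \<le> 4 ^ Suc k * (4 * P)"
        proof -
          have "1 \<le> (4::real) ^ k" by simp
          hence "1 * P \<le> 4 ^ k * P" using P0 by (intro mult_right_mono) auto
          thus ?thesis using P0 by (simp add: algebra_simps)
        qed
        finally show ?thesis .
      qed
    qed
  qed
  have each: "(\<zeta> x)\<^sup>2 \<le> 4 ^ card \<Lambda> * (4 * P)" if "x \<in> \<Lambda>" for x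
  proof -
    have "\<exists>k \<le> card \<Lambda>. x + axis i (int k) \<notin> \<Lambda>"
    proof (rule ccontr)
      assume "\<not> ?thesis"
      hence sub: "(\<lambda>k. x + axis i (int k)) ` {0..card \<Lambda>} \<subseteq> \<Lambda>" by auto
      have "inj_on (\<lambda>k. x + axis i (int k)) {0..card \<Lambda>}"
        by (auto simp: inj_on_def vec_eq_iff axis_def)
      hence "card {0..card \<Lambda>} \<le> card \<Lambda>" using card_inj_on_le[OF _ sub fin] by simp
      thus False by simp
    qed
    then obtain k where k: "k \<le> card \<Lambda>" "x + axis i (int k) \<notin> \<Lambda>" by blast
    have "(\<zeta> x)\<^sup>2 \<le> 4 ^ k * (4 * P)" using ind k(2) by blast
    also have "\<dots> \<le> 4 ^ card \<Lambda> * (4 * P)"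
      using k(1) P0 by (intro mult_right_mono power_increasing) auto
    finally show ?thesis .
  qed
  have "(\<Sum>x\<in>\<Lambda>. (\<zeta> x)\<^sup>2) \<le> (\<Sum>x\<in>\<Lambda>. 4 ^ card \<Lambda> * (4 * P))" by (rule sum_mono) (rule each)
  also have "\<dots> = real (card \<Lambda>) * 4 ^ card \<Lambda> * 4 * P" by simp
  finally show ?thesis unfolding P_def .
qed



lemma emeasure_leb_space: "finite \<Lambda> \<Longrightarrow> emeasure (leb_on \<Lambda>) (space (leb_on \<Lambda>)) \<noteq> 0"
proof -
  assume fin: "finite \<Lambda>"
  interpret product_sigma_finite "\<lambda>_::'a site. lborel :: real measure" by standard
  have "space (leb_on \<Lambda>) = PiE \<Lambda> (\<lambda>_. UNIV)" by (simp add: space_PiM)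
  hence "emeasure (leb_on \<Lambda>) (space (leb_on \<Lambda>)) = (\<Prod>i\<in>\<Lambda>. emeasure lborel (UNIV :: real set))"
    using emeasure_PiM[OF fin, of "\<lambda>_. UNIV"] by simp
  also have "\<dots> = \<infinity> ^ card \<Lambda>" by simp
  finally show ?thesis by (simp add: power_eq_0_iff)
qed

lemma int_pos:
  fixes f :: "_ \<Rightarrow> real"
  assumes fin: "finite \<Lambda>" and int: "integrable (leb_on \<Lambda>) f"
    and pos: "\<And>\<phi>. \<phi> \<in> space (leb_on \<Lambda>) \<Longrightarrow> 0 < f \<phi>"
  shows "0 < integral\<^sup>L (leb_on \<Lambda>) f"
proof -
  have nn: "AE x in leb_on \<Lambda>. 0 \<le> f x" using pos by (intro AE_I2) (simp add: less_imp_le)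
  have ge: "0 \<le> integral\<^sup>L (leb_on \<Lambda>) f" using nn by (rule integral_nonneg_AE)
  have "integral\<^sup>L (leb_on \<Lambda>) f \<noteq> 0"
  proof
    assume "integral\<^sup>L (leb_on \<Lambda>) f = 0"
    hence "AE x in leb_on \<Lambda>. f x = 0" using integral_nonneg_eq_0_iff_AE[OF int nn] by simp
    moreover have "AE x in leb_on \<Lambda>. f x \<noteq> 0" using pos by (intro AE_I2) (simp add: less_imp_neq[symmetric]) 
    ultimately have "AE x in leb_on \<Lambda>. False" by eventually_elim simp
    hence "ae_filter (leb_on \<Lambda>) = bot" by (simp add: eventually_False)
    thus False using emeasure_leb_space[OF fin] ae_filter_eq_bot_iff by blast
  qed
  thus ?thesis using ge by simp
qed

definition transl :: "'d::finite site set \<Rightarrow> ('d site \<Rightarrow> real) \<Rightarrow> ('d site \<Rightarrow> real) \<Rightarrow> ('d site \<Rightarrow> real)" where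
  "transl \<Lambda> t \<phi> = restrict (\<lambda>x. \<phi> x - t x) \<Lambda>"

lemma transl_meas: "transl \<Lambda> t \<in> measurable (leb_on \<Lambda>) (leb_on \<Lambda>)"
  unfolding transl_def by (intro measurable_restrict) (auto intro!: borel_measurable_diff measurable_component_singleton)

lemma lborel_shift: "A \<in> sets lborel \<Longrightarrow> emeasure lborel ((\<lambda>s. s - c) -` A) = emeasure lborel (A :: real set)"
proof -
  assume A: "A \<in> sets lborel"
  have "emeasure lborel A = emeasure (distr lborel borel ((+) (- c))) A" by (simp add: lborel_distr_plus)
  also have "\<dots> = emeasure lborel ((+) (- c) -` A \<inter> space lborel)"
    using A by (intro emeasure_distr) auto
  also have "(+) (- c) -` A \<inter> space lborel = (\<lambda>s. s - c) -` A" by auto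
  finally show ?thesis by simp
qed

lemma shift_sets: "A \<in> sets borel \<Longrightarrow> (\<lambda>s. s - c) -` A \<in> sets (borel :: real measure)"
proof -
  assume A: "A \<in> sets borel"
  have "(\<lambda>s::real. s - c) \<in> borel_measurable borel" by simp
  from measurable_sets[OF this A] show ?thesis by simp
qed

lemma distr_transl: "finite \<Lambda> \<Longrightarrow> distr (leb_on \<Lambda>) (leb_on \<Lambda>) (transl \<Lambda> t) = leb_on \<Lambda>"
proof -
  assume fin: "finite \<Lambda>"
  interpret product_sigma_finite "\<lambda>_::'a site. lborel :: real measure" by standard
  show ?thesis
  proof (rule PiM_eqI[OF fin])
    show "sets (distr (leb_on \<Lambda>) (leb_on \<Lambda>) (transl \<Lambda> t)) = sets (leb_on \<Lambda>)" by simp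
  next
    fix A assume A: "\<And>i. i \<in> \<Lambda> \<Longrightarrow> A i \<in> sets (lborel :: real measure)"
    have PA: "PiE \<Lambda> A \<in> sets (leb_on \<Lambda>)" using A fin by (intro sets_PiM_I_finite) auto
    have pre: "transl \<Lambda> t -` PiE \<Lambda> A \<inter> space (leb_on \<Lambda>) = PiE \<Lambda> (\<lambda>i. (\<lambda>s. s - t i) -` A i)"
      by (auto simp: transl_def space_PiM PiE_def extensional_def Pi_def)
    have "emeasure (distr (leb_on \<Lambda>) (leb_on \<Lambda>) (transl \<Lambda> t)) (PiE \<Lambda> A)
        = emeasure (leb_on \<Lambda>) (transl \<Lambda> t -` PiE \<Lambda> A \<inter> space (leb_on \<Lambda>))"
      by (rule emeasure_distr[OF transl_meas PA])
    also have "\<dots> = (\<Prod>i\<in>\<Lambda>. emeasure lborel ((\<lambda>s. s - t i) -` A i))"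
      unfolding pre using A by (intro emeasure_PiM[OF fin]) (auto intro: shift_sets)
    also have "\<dots> = (\<Prod>i\<in>\<Lambda>. emeasure lborel (A i))"
      using A by (intro prod.cong refl lborel_shift) auto
    finally show "emeasure (distr (leb_on \<Lambda>) (leb_on \<Lambda>) (transl \<Lambda> t)) (PiE \<Lambda> A) = (\<Prod>i\<in>\<Lambda>. emeasure lborel (A i))" .
  qed
qed

lemma integral_transl:
  assumes "finite \<Lambda>" "f \<in> borel_measurable (leb_on \<Lambda>)"
  shows "(\<integral>\<phi>. f (transl \<Lambda> t \<phi>) \<partial>leb_on \<Lambda>) = integral\<^sup>L (leb_on \<Lambda>) (f :: _ \<Rightarrow> real)"
  using integral_distr[OF transl_meas assms(2), of t] distr_transl[OF assms(1), of t] by simp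

lemma integrable_transl:
  assumes "finite \<Lambda>" "f \<in> borel_measurable (leb_on \<Lambda>)" "integrable (leb_on \<Lambda>) (f :: _ \<Rightarrow> real)"
  shows "integrable (leb_on \<Lambda>) (\<lambda>\<phi>. f (transl \<Lambda> t \<phi>))"
  using integrable_distr_eq[OF transl_meas assms(2), of t] distr_transl[OF assms(1), of t] assms(3) by simp



definition ze :: "'d::finite site set \<Rightarrow> ('d site \<Rightarrow> real) \<Rightarrow> 'd site \<Rightarrow> real" where
  "ze \<Lambda> \<phi> = ext_cfg \<Lambda> (\<lambda>_. 0) \<phi>"
definition QP :: "'d::finite site set \<Rightarrow> ('d site \<Rightarrow> real) \<Rightarrow> real" where
  "QP \<Lambda> \<phi> = PS \<Lambda> (\<lambda>x y. (ze \<Lambda> \<phi> x - ze \<Lambda> \<phi> y)\<^sup>2)"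

lemma ext_meas[measurable]: "(\<lambda>\<phi>. ext_cfg \<Lambda> \<psi> \<phi> x) \<in> borel_measurable (leb_on \<Lambda>)"
  by (cases "x \<in> \<Lambda>") (auto simp: ext_cfg_def intro: measurable_component_singleton)

lemma PS_meas:
  assumes "\<And>x y. (\<lambda>\<phi>. g \<phi> x y) \<in> borel_measurable M"
  shows "(\<lambda>\<phi>. PS \<Lambda> (g \<phi>)) \<in> borel_measurable M"
  unfolding PS_def
proof (intro borel_measurable_sum)
  fix x y show "(\<lambda>\<phi>. if nn x y then wt \<Lambda> y * g \<phi> x y else 0) \<in> borel_measurable M"
    using assms by (cases "nn x y") auto
qed

lemma QP_meas[measurable]: "QP \<Lambda> \<in> borel_measurable (leb_on \<Lambda>)"
proof -
  have "(\<lambda>\<phi>. QP \<Lambda> \<phi>) \<in> borel_measurable (leb_on \<Lambda>)"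
    unfolding QP_def ze_def by (rule PS_meas) measurable
  thus ?thesis by simp
qed

lemma QP_nonneg: "0 \<le> QP \<Lambda> \<phi>"
  unfolding QP_def by (rule PS_nonneg) simp

lemma gauss1: "a > 0 \<Longrightarrow> integrable lborel (\<lambda>s::real. exp (- a * s\<^sup>2))"
proof -
  assume a: "a > 0"
  define \<sigma> where "\<sigma> = sqrt (1 / (2 * a))"
  have s2: "\<sigma>\<^sup>2 = 1 / (2 * a)" using a by (simp add: \<sigma>_def)
  have eq: "exp (- a * s\<^sup>2) = sqrt (2 * pi * \<sigma>\<^sup>2) * normal_density 0 \<sigma> s" for s
  proof -
    have "sqrt (2 * pi * \<sigma>\<^sup>2) > 0" using a s2 by simp
    moreover have "- (s - 0)\<^sup>2 / (2 * \<sigma>\<^sup>2) = - a * s\<^sup>2" unfolding s2 using a by (simp add: field_simps)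
    moreover have "\<sigma> \<noteq> 0" using a s2 by auto
    ultimately show ?thesis unfolding normal_density_def by simp
  qed
  have "\<sigma> > 0" using a by (simp add: \<sigma>_def)
  thus ?thesis unfolding eq by (intro integrable_mult_right integrable_normal_density)
qed

lemma gauss_integrable:
  assumes fin: "finite \<Lambda>" and c: "c > 0"
  shows "integrable (leb_on \<Lambda>) (\<lambda>\<phi>. exp (- c * QP \<Lambda> \<phi>))"
proof -
  interpret product_sigma_finite "\<lambda>_::'a site. lborel :: real measure" by standard
  define K where "K = real (card \<Lambda>) * 4 ^ card \<Lambda> * 4 + 1"
  have K: "K > 0" unfolding K_def by (simp add: add_nonneg_pos)
  define a where "a = c / K"
  have a: "a > 0" using K c by (simp add: a_def)
  have dom: "integrable (leb_on \<Lambda>) (\<lambda>\<phi>. \<Prod>x\<in>\<Lambda>. exp (- a * (\<phi> x)\<^sup>2))"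
    using gauss1[OF a] by (intro product_integrable_prod fin) auto
  show ?thesis
  proof (rule Bochner_Integration.integrable_bound[OF dom])
    show "(\<lambda>\<phi>. exp (- c * QP \<Lambda> \<phi>)) \<in> borel_measurable (leb_on \<Lambda>)" by measurable
    show "AE \<phi> in leb_on \<Lambda>. norm (exp (- c * QP \<Lambda> \<phi>)) \<le> norm (\<Prod>x\<in>\<Lambda>. exp (- a * (\<phi> x)\<^sup>2))"
    proof (intro AE_I2)
      fix \<phi>
      have z: "ze \<Lambda> \<phi> x = 0" if "x \<notin> \<Lambda>" for x using that by (simp add: ze_def ext_cfg_def)
      have "(\<Sum>x\<in>\<Lambda>. (ze \<Lambda> \<phi> x)\<^sup>2) \<le> real (card \<Lambda>) * 4 ^ card \<Lambda> * 4 * QP \<Lambda> \<phi>"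
        unfolding QP_def by (rule poincare[OF fin z])
      also have "\<dots> \<le> K * QP \<Lambda> \<phi>" unfolding K_def using QP_nonneg[of \<Lambda> \<phi>] by (simp add: algebra_simps)
      finally have P: "(\<Sum>x\<in>\<Lambda>. (\<phi> x)\<^sup>2) \<le> K * QP \<Lambda> \<phi>" by (simp add: ze_def ext_cfg_def)
      have "- c * QP \<Lambda> \<phi> \<le> - a * (\<Sum>x\<in>\<Lambda>. (\<phi> x)\<^sup>2)"
      proof -
        have "a * (\<Sum>x\<in>\<Lambda>. (\<phi> x)\<^sup>2) \<le> a * (K * QP \<Lambda> \<phi>)" using P a by (intro mult_left_mono) auto
        also have "\<dots> = c * QP \<Lambda> \<phi>" using K by (simp add: a_def)
        finally show ?thesis by simp
      qed
      hence "exp (- c * QP \<Lambda> \<phi>) \<le> exp (- a * (\<Sum>x\<in>\<Lambda>. (\<phi> x)\<^sup>2))" by simp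
      also have "\<dots> = (\<Prod>x\<in>\<Lambda>. exp (- a * (\<phi> x)\<^sup>2))"
        using fin by (simp add: exp_sum[symmetric] sum_distrib_left)
      finally show "norm (exp (- c * QP \<Lambda> \<phi>)) \<le> norm (\<Prod>x\<in>\<Lambda>. exp (- a * (\<phi> x)\<^sup>2))"
        by (simp add: prod_nonneg abs_prod)
    qed
  qed
qed



lemma Ham_PS:
  assumes "finite \<Lambda>"
  shows "Ham V \<Lambda> \<psi> \<phi> = PS \<Lambda> (\<lambda>x y. V x y (ext_cfg \<Lambda> \<psi> \<phi> x - ext_cfg \<Lambda> \<psi> \<phi> y))"
  unfolding Ham_def PS_split[OF assms]
  by (intro arg_cong2[where f="(+)"] arg_cong2[where f="(*)"] refl sum.cong)
     (auto simp: ext_cfg_def bdry_def)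

lemma sigma_QP:
  assumes "finite \<Lambda>"
  shows "- (c/2) * (\<Sum>(x,y)\<in>{(x,y). x \<in> \<Lambda> \<and> y \<in> \<Lambda> \<and> nn x y}. (\<phi> x - \<phi> y)\<^sup>2)
           - c * (\<Sum>(x,y)\<in>{(x,y). x \<in> \<Lambda> \<and> y \<in> bdry \<Lambda> \<and> nn x y}. (\<phi> x)\<^sup>2) = - c * QP \<Lambda> \<phi>"
proof -
  have "QP \<Lambda> \<phi> = (1/2) * (\<Sum>(x,y)\<in>{(x,y). x \<in> \<Lambda> \<and> y \<in> \<Lambda> \<and> nn x y}. (\<phi> x - \<phi> y)\<^sup>2)
           + (\<Sum>(x,y)\<in>{(x,y). x \<in> \<Lambda> \<and> y \<in> bdry \<Lambda> \<and> nn x y}. (\<phi> x)\<^sup>2)"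
    unfolding QP_def PS_split[OF assms]
    by (intro arg_cong2[where f="(+)"] arg_cong2[where f="(*)"] refl sum.cong)
       (auto simp: ze_def ext_cfg_def bdry_def)
  thus ?thesis by (simp add: algebra_simps)
qed

lemma ze_transl: "ze \<Lambda> (transl \<Lambda> \<psi> \<phi>) = (\<lambda>x. ext_cfg \<Lambda> \<psi> \<phi> x - \<psi> x)"
  by (auto simp: fun_eq_iff ze_def ext_cfg_def transl_def)

lemma QP_transl: "QP \<Lambda> (transl \<Lambda> \<psi> \<phi>) = PS \<Lambda> (\<lambda>x y. ((ext_cfg \<Lambda> \<psi> \<phi> x - \<psi> x) - (ext_cfg \<Lambda> \<psi> \<phi> y - \<psi> y))\<^sup>2)"
  unfolding QP_def ze_transl ..

lemma tilt_diff: "ext_cfg \<Lambda> (psi_tilt u) \<phi> x - ext_cfg \<Lambda> (psi_tilt u) \<phi> y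
   = (ext_cfg \<Lambda> (psi_tilt u) \<phi> x - psi_tilt u x) - (ext_cfg \<Lambda> (psi_tilt u) \<phi> y - psi_tilt u y) + sdot (x - y) u"
  by (simp add: psi_tilt_def sdot_diff)

lemma quad_tilt:
  assumes fin: "finite \<Lambda>"
  shows "PS \<Lambda> (\<lambda>x y. (ext_cfg \<Lambda> (psi_tilt u) \<phi> x - ext_cfg \<Lambda> (psi_tilt u) \<phi> y)\<^sup>2)
       = QP \<Lambda> (transl \<Lambda> (psi_tilt u) \<phi>) + PS \<Lambda> (\<lambda>x y. (sdot (x - y) u)\<^sup>2)"
proof -
  define \<zeta> where "\<zeta> x = ext_cfg \<Lambda> (psi_tilt u) \<phi> x - psi_tilt u x" for x
  have z: "\<zeta> x = 0" if "x \<notin> \<Lambda>" for x using that by (simp add: \<zeta>_def ext_cfg_def)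
  have "PS \<Lambda> (\<lambda>x y. (ext_cfg \<Lambda> (psi_tilt u) \<phi> x - ext_cfg \<Lambda> (psi_tilt u) \<phi> y)\<^sup>2)
      = PS \<Lambda> (\<lambda>x y. (\<zeta> x - \<zeta> y + sdot (x - y) u)\<^sup>2)"
    unfolding \<zeta>_def by (subst tilt_diff) (rule refl)
  also have "\<dots> = PS \<Lambda> (\<lambda>x y. (\<zeta> x - \<zeta> y)\<^sup>2) + PS \<Lambda> (\<lambda>x y. (sdot (x - y) u)\<^sup>2)"
    by (rule PS_expand[OF fin z])
  finally show ?thesis unfolding QP_transl \<zeta>_def .
qed

lemma infsum_tilt:
  assumes fin: "finite \<Lambda>"
  shows "(\<Sum>\<^sub>\<infinity>(x,y)\<in>{(x,y). nn x y}.
            (ext_cfg \<Lambda> (psi_tilt u) \<phi> x - ext_cfg \<Lambda> (psi_tilt u) \<phi> y - sdot (x - y) u)\<^sup>2)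
       = 2 * QP \<Lambda> (transl \<Lambda> (psi_tilt u) \<phi>)"
proof -
  define \<zeta> where "\<zeta> x = ext_cfg \<Lambda> (psi_tilt u) \<phi> x - psi_tilt u x" for x
  have z: "\<zeta> x = 0" if "x \<notin> \<Lambda>" for x using that by (simp add: \<zeta>_def ext_cfg_def)
  have tm: "ext_cfg \<Lambda> (psi_tilt u) \<phi> x - ext_cfg \<Lambda> (psi_tilt u) \<phi> y - sdot (x - y) u = \<zeta> x - \<zeta> y" for x y
    unfolding \<zeta>_def by (simp add: psi_tilt_def sdot_diff)
  define F where "F = {(x,y). nn x y \<and> (x \<in> \<Lambda> \<or> y \<in> \<Lambda>)}"
  define F1 where "F1 = {(x,y). x \<in> \<Lambda> \<and> y \<in> TT \<Lambda> \<and> nn x y}"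
  define F2 where "F2 = {(x,y). x \<in> bdry \<Lambda> \<and> y \<in> \<Lambda> \<and> nn x y}"
  have FU: "F = F1 \<union> F2"
    unfolding F_def F1_def F2_def using TT_nbr[of _ \<Lambda>] nn_sym by (auto simp: bdry_def)
  have fin1: "finite F1" unfolding F1_def
    by (rule finite_subset[of _ "\<Lambda> \<times> TT \<Lambda>"]) (auto simp: fin finite_TT)
  have fin2: "finite F2" unfolding F2_def
    by (rule finite_subset[of _ "bdry \<Lambda> \<times> \<Lambda>"]) (auto simp: fin finite_bdry)
  have disj: "F1 \<inter> F2 = {}" unfolding F1_def F2_def bdry_def by auto
  have "(\<Sum>\<^sub>\<infinity>(x,y)\<in>{(x,y). nn x y}.
            (ext_cfg \<Lambda> (psi_tilt u) \<phi> x - ext_cfg \<Lambda> (psi_tilt u) \<phi> y - sdot (x - y) u)\<^sup>2)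
      = (\<Sum>\<^sub>\<infinity>(x,y)\<in>{(x,y). nn x y}. (\<zeta> x - \<zeta> y)\<^sup>2)" by (simp only: tm)
  also have "\<dots> = (\<Sum>\<^sub>\<infinity>(x,y)\<in>F. (\<zeta> x - \<zeta> y)\<^sup>2)"
    by (rule infsum_cong_neutral) (auto simp: F_def, (metis z)+)
  also have "\<dots> = (\<Sum>(x,y)\<in>F1. (\<zeta> x - \<zeta> y)\<^sup>2) + (\<Sum>(x,y)\<in>F2. (\<zeta> x - \<zeta> y)\<^sup>2)"
    using fin1 fin2 disj by (simp add: FU sum.union_disjoint)
  also have "\<dots> = (\<Sum>x\<in>\<Lambda>. \<Sum>y\<in>TT \<Lambda>. if nn x y then (\<zeta> x - \<zeta> y)\<^sup>2 else 0)
                 + (\<Sum>x\<in>bdry \<Lambda>. \<Sum>y\<in>\<Lambda>. if nn x y then (\<zeta> x - \<zeta> y)\<^sup>2 else 0)"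
    unfolding F1_def F2_def using fin by (simp add: pair_sum finite_TT finite_bdry)
  also have "\<dots> = 2 * PS \<Lambda> (\<lambda>x y. (\<zeta> x - \<zeta> y)\<^sup>2)"
    by (rule PS2[OF fin, symmetric]) (simp add: power2_commute)
  finally show ?thesis unfolding QP_transl \<zeta>_def .
qed



lemma PS_meas_nn:
  assumes "\<And>x y. nn x y \<Longrightarrow> (\<lambda>\<phi>. g \<phi> x y) \<in> borel_measurable M"
  shows "(\<lambda>\<phi>. PS \<Lambda> (g \<phi>)) \<in> borel_measurable M"
  unfolding PS_def
proof (intro borel_measurable_sum)
  fix x y show "(\<lambda>\<phi>. if nn x y then wt \<Lambda> y * g \<phi> x y else 0) \<in> borel_measurable M"
    using assms by (cases "nn x y") auto
qed

lemma main_bound: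
  fixes V :: "'d::finite site \<Rightarrow> 'd site \<Rightarrow> real \<Rightarrow> real" and B :: "'d site \<Rightarrow> 'd site \<Rightarrow> real"
  assumes fin: "finite \<Lambda>"
    and cont: "\<And>x y. nn x y \<Longrightarrow> continuous_on UNIV (V x y)"
    and bnd: "\<And>x y s. nn x y \<Longrightarrow> A * s\<^sup>2 - B x y \<le> V x y s \<and> V x y s \<le> C2 * s\<^sup>2"
    and C2: "C2 > 0" and \<beta>: "0 < \<beta>" "\<beta> < A"
  shows "Ffun V \<beta> u \<Lambda> \<le> PS \<Lambda> B - A * PS \<Lambda> (\<lambda>x y. (sdot (x - y) u)\<^sup>2) + C2 * PS \<Lambda> (\<lambda>x y. (sdot (x - y) u)\<^sup>2)
        + ln (\<integral>\<phi>. exp (- (A - \<beta>) * QP \<Lambda> \<phi>) \<partial>leb_on \<Lambda>) - ln (\<integral>\<phi>. exp (- C2 * QP \<Lambda> \<phi>) \<partial>leb_on \<Lambda>)"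
proof -
  define \<psi> where "\<psi> = psi_tilt u"
  define M where "M = leb_on \<Lambda>"
  define Cu where "Cu = PS \<Lambda> (\<lambda>x y. (sdot (x - y) u)\<^sup>2)"
  define Bs where "Bs = PS \<Lambda> B"
  define H where "H \<phi> = Ham V \<Lambda> \<psi> \<phi>" for \<phi>
  define Q where "Q \<phi> = QP \<Lambda> (transl \<Lambda> \<psi> \<phi>)" for \<phi>
  define Zg where "Zg c = (\<integral>\<phi>. exp (- c * QP \<Lambda> \<phi>) \<partial>M)" for c
  have Q0: "0 \<le> Q \<phi>" for \<phi> unfolding Q_def by (rule QP_nonneg)
  have sq: "PS \<Lambda> (\<lambda>x y. (ext_cfg \<Lambda> \<psi> \<phi> x - ext_cfg \<Lambda> \<psi> \<phi> y)\<^sup>2) = Q \<phi> + Cu" for \<phi>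
    unfolding \<psi>_def Q_def Cu_def by (rule quad_tilt[OF fin])
  have H: "H \<phi> = PS \<Lambda> (\<lambda>x y. V x y (ext_cfg \<Lambda> \<psi> \<phi> x - ext_cfg \<Lambda> \<psi> \<phi> y))" for \<phi>
    unfolding H_def by (rule Ham_PS[OF fin])
  have low: "A * (Q \<phi> + Cu) - Bs \<le> H \<phi>" for \<phi>
  proof -
    have "A * (Q \<phi> + Cu) - Bs = PS \<Lambda> (\<lambda>x y. A * (ext_cfg \<Lambda> \<psi> \<phi> x - ext_cfg \<Lambda> \<psi> \<phi> y)\<^sup>2 - B x y)"
      by (simp add: PS_diff PS_scale sq Bs_def)
    also have "\<dots> \<le> H \<phi>" unfolding H using bnd by (intro PS_mono) auto
    finally show ?thesis .
  qed
  have up: "H \<phi> \<le> C2 * (Q \<phi> + Cu)" for \<phi>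
  proof -
    have "H \<phi> \<le> PS \<Lambda> (\<lambda>x y. C2 * (ext_cfg \<Lambda> \<psi> \<phi> x - ext_cfg \<Lambda> \<psi> \<phi> y)\<^sup>2)"
      unfolding H using bnd by (intro PS_mono) auto
    also have "\<dots> = C2 * (Q \<phi> + Cu)" by (simp add: PS_scale sq)
    finally show ?thesis .
  qed
  have inf: "(\<Sum>\<^sub>\<infinity>(x,y)\<in>{(x,y). nn x y}. (ext_cfg \<Lambda> \<psi> \<phi> x - ext_cfg \<Lambda> \<psi> \<phi> y - sdot (x - y) u)\<^sup>2) = 2 * Q \<phi>" for \<phi>
    unfolding \<psi>_def Q_def by (rule infsum_tilt[OF fin])
  have Hm: "H \<in> borel_measurable M"
  proof -
    have "(\<lambda>\<phi>. PS \<Lambda> (\<lambda>x y. V x y (ext_cfg \<Lambda> \<psi> \<phi> x - ext_cfg \<Lambda> \<psi> \<phi> y))) \<in> borel_measurable M"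
    proof (rule PS_meas_nn)
      fix x y :: "'d site" assume "nn x y"
      hence "V x y \<in> borel_measurable borel" using cont by (intro borel_measurable_continuous_onI) auto
      moreover have "(\<lambda>\<phi>. ext_cfg \<Lambda> \<psi> \<phi> x - ext_cfg \<Lambda> \<psi> \<phi> y) \<in> borel_measurable M"
        unfolding M_def by measurable
      ultimately show "(\<lambda>\<phi>. V x y (ext_cfg \<Lambda> \<psi> \<phi> x - ext_cfg \<Lambda> \<psi> \<phi> y)) \<in> borel_measurable M"
        by (rule measurable_compose[rotated])
    qed
    thus ?thesis by (simp add: H[abs_def])
  qed
  have Qm: "Q \<in> borel_measurable M"
    unfolding Q_def M_def by (rule measurable_compose[OF transl_meas QP_meas])
  have Gint: "integrable M (\<lambda>\<phi>. exp (- c * Q \<phi>))" if "c > 0" for c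
  proof -
    have "(\<lambda>\<phi>. exp (- c * QP \<Lambda> \<phi>)) \<in> borel_measurable (leb_on \<Lambda>)" by measurable
    from integrable_transl[OF fin this gauss_integrable[OF fin that]]
    show ?thesis unfolding Q_def M_def .
  qed
  have Gintegral: "(\<integral>\<phi>. exp (- c * Q \<phi>) \<partial>M) = Zg c" for c
  proof -
    have "(\<lambda>\<phi>. exp (- c * QP \<Lambda> \<phi>)) \<in> borel_measurable (leb_on \<Lambda>)" by measurable
    from integral_transl[OF fin this]
    show ?thesis unfolding Q_def M_def Zg_def .
  qed
  have Zgpos: "Zg c > 0" if "c > 0" for c
    unfolding Zg_def M_def by (rule int_pos[OF fin gauss_integrable[OF fin that]]) simp
  define g where "g \<phi> = exp (Bs - A * Cu) * exp (- (A - \<beta>) * Q \<phi>)" for \<phi>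
  define f0 where "f0 \<phi> = exp (- H \<phi>)" for \<phi>
  define f1 where "f1 \<phi> = exp (- H \<phi>) * exp (\<beta> * Q \<phi>)" for \<phi>
  define l where "l \<phi> = exp (- C2 * Cu) * exp (- C2 * Q \<phi>)" for \<phi>
  have gint: "integrable M g" unfolding g_def using Gint[of "A - \<beta>"] \<beta> by (intro integrable_mult_right) auto
  have lint: "integrable M l" unfolding l_def using Gint[of C2] C2 by (intro integrable_mult_right) auto
  have f1g: "f1 \<phi> \<le> g \<phi>" for \<phi>
  proof -
    have "- H \<phi> + \<beta> * Q \<phi> \<le> Bs - A * Cu + (- (A - \<beta>) * Q \<phi>)" using low[of \<phi>] by (simp add: algebra_simps)
    thus ?thesis unfolding f1_def g_def by (simp add: exp_add[symmetric])
  qed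
  have f0g: "f0 \<phi> \<le> g \<phi>" for \<phi>
  proof -
    have "0 \<le> \<beta> * Q \<phi>" using \<beta> Q0[of \<phi>] by simp
    hence "- H \<phi> \<le> Bs - A * Cu + (- (A - \<beta>) * Q \<phi>)" using low[of \<phi>] by (simp add: algebra_simps)
    thus ?thesis unfolding f0_def g_def by (simp add: exp_add[symmetric])
  qed
  have lf0: "l \<phi> \<le> f0 \<phi>" for \<phi>
  proof -
    have "- C2 * Cu + (- C2 * Q \<phi>) \<le> - H \<phi>" using up[of \<phi>] by (simp add: algebra_simps)
    thus ?thesis unfolding f0_def l_def by (simp add: exp_add[symmetric])
  qed
  have f0m: "f0 \<in> borel_measurable M" unfolding f0_def using Hm by measurable
  have f1m: "f1 \<in> borel_measurable M" unfolding f1_def using Hm Qm by measurable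
  have f0int: "integrable M f0"
  proof (rule Bochner_Integration.integrable_bound[OF gint f0m], intro AE_I2)
    fix \<phi> have "0 \<le> f0 \<phi>" by (simp add: f0_def)
    thus "norm (f0 \<phi>) \<le> norm (g \<phi>)" using f0g[of \<phi>] by simp
  qed
  have f1int: "integrable M f1"
  proof (rule Bochner_Integration.integrable_bound[OF gint f1m], intro AE_I2)
    fix \<phi> have "0 \<le> f1 \<phi>" by (simp add: f1_def)
    thus "norm (f1 \<phi>) \<le> norm (g \<phi>)" using f1g[of \<phi>] by simp
  qed
  define N where "N = integral\<^sup>L M f1"
  define Z where "Z = integral\<^sup>L M f0"
  have Npos: "N > 0" unfolding N_def M_def by (rule int_pos[OF fin f1int[unfolded M_def]]) (simp add: f1_def)
  have Zpos: "Z > 0" unfolding Z_def M_def by (rule int_pos[OF fin f0int[unfolded M_def]]) (simp add: f0_def)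
  have Nle: "N \<le> exp (Bs - A * Cu) * Zg (A - \<beta>)"
  proof -
    have "N \<le> integral\<^sup>L M g" unfolding N_def by (rule integral_mono[OF f1int gint f1g])
    also have "\<dots> = exp (Bs - A * Cu) * Zg (A - \<beta>)" unfolding g_def integral_mult_right_zero Gintegral by (rule refl)
    finally show ?thesis .
  qed
  have Zge: "exp (- C2 * Cu) * Zg C2 \<le> Z"
  proof -
    have "exp (- C2 * Cu) * Zg C2 = integral\<^sup>L M l" unfolding l_def integral_mult_right_zero Gintegral by (rule refl)
    also have "\<dots> \<le> Z" unfolding Z_def by (rule integral_mono[OF lint f0int lf0])
    finally show ?thesis .
  qed
  have Zg1: "Zg (A - \<beta>) > 0" using Zgpos \<beta> by simp
  have Zg2: "Zg C2 > 0" using Zgpos C2 by simp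
  have F: "Ffun V \<beta> u \<Lambda> = ln (N / Z)"
  proof -
    have "(\<integral>\<phi>. exp (- Ham V \<Lambda> \<psi> \<phi>) *
                 exp (\<beta> / 2 * (\<Sum>\<^sub>\<infinity>(x,y)\<in>{(x,y). nn x y}.
                   (ext_cfg \<Lambda> \<psi> \<phi> x - ext_cfg \<Lambda> \<psi> \<phi> y - sdot (x - y) u)\<^sup>2)) \<partial>leb_on \<Lambda>) = N"
      unfolding N_def M_def f1_def H_def by (simp add: inf)
    moreover have "(\<integral>\<phi>. exp (- Ham V \<Lambda> \<psi> \<phi>) \<partial>leb_on \<Lambda>) = Z"
      unfolding Z_def M_def f0_def H_def ..
    ultimately show ?thesis unfolding Ffun_def Let_def \<psi>_def by simp
  qed
  have d: "ln (N / Z) = ln N - ln Z" using Npos Zpos by (simp add: ln_div)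
  have "ln N \<le> ln (exp (Bs - A * Cu) * Zg (A - \<beta>))" using Npos Nle by simp
  also have "\<dots> = Bs - A * Cu + ln (Zg (A - \<beta>))" using Zg1 by (simp add: ln_mult)
  finally have a1: "ln N \<le> Bs - A * Cu + ln (Zg (A - \<beta>))" .
  have "ln (exp (- C2 * Cu) * Zg C2) \<le> ln Z" using Zge Zg2 Zpos by (subst ln_le_cancel_iff) auto
  hence a2: "- C2 * Cu + ln (Zg C2) \<le> ln Z" using Zg2 by (simp add: ln_mult)
  have "Ffun V \<beta> u \<Lambda> \<le> Bs - A * Cu + C2 * Cu + ln (Zg (A - \<beta>)) - ln (Zg C2)"
    using F d a1 a2 by linarith
  thus ?thesis unfolding Bs_def Cu_def Zg_def M_def .
qed



lemma PS_le_full: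
  assumes fin: "finite \<Lambda>" and nn0: "\<And>x y. nn x y \<Longrightarrow> 0 \<le> g x y"
  shows "PS \<Lambda> g \<le> (\<Sum>(x,y)\<in>{(x,y). x \<in> \<Lambda> \<union> bdry \<Lambda> \<and> y \<in> \<Lambda> \<union> bdry \<Lambda> \<and> nn x y}. g x y)"
proof -
  have "PS \<Lambda> g \<le> (\<Sum>x\<in>\<Lambda>. \<Sum>y\<in>TT \<Lambda>. if nn x y then g x y else 0)"
    unfolding PS_def using nn0 by (intro sum_mono) (auto simp: wt_def)
  also have "\<dots> \<le> (\<Sum>x\<in>TT \<Lambda>. \<Sum>y\<in>TT \<Lambda>. if nn x y then g x y else 0)"
    using fin nn0 by (intro sum_mono2) (auto simp: finite_TT finite_bdry TT_def intro!: sum_nonneg)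
  also have "\<dots> = (\<Sum>(x,y)\<in>{(x,y). x \<in> \<Lambda> \<union> bdry \<Lambda> \<and> y \<in> \<Lambda> \<union> bdry \<Lambda> \<and> nn x y}. g x y)"
    using fin by (simp add: pair_sum finite_TT TT_def[symmetric])
  finally show ?thesis .
qed

lemma PS2_le_full:
  assumes fin: "finite \<Lambda>" and nn0: "\<And>x y. nn x y \<Longrightarrow> 0 \<le> g x y"
    and sym: "\<And>x y. nn x y \<Longrightarrow> g x y = g y x"
  shows "2 * PS \<Lambda> g \<le> (\<Sum>(x,y)\<in>{(x,y). x \<in> \<Lambda> \<union> bdry \<Lambda> \<and> y \<in> \<Lambda> \<union> bdry \<Lambda> \<and> nn x y}. g x y)"
proof -
  have "2 * PS \<Lambda> g = (\<Sum>x\<in>\<Lambda>. \<Sum>y\<in>TT \<Lambda>. if nn x y then g x y else 0) + (\<Sum>x\<in>bdry \<Lambda>. \<Sum>y\<in>\<Lambda>. if nn x y then g x y else 0)"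
    by (rule PS2[OF fin sym])
  also have "\<dots> \<le> (\<Sum>x\<in>\<Lambda>. \<Sum>y\<in>TT \<Lambda>. if nn x y then g x y else 0) + (\<Sum>x\<in>bdry \<Lambda>. \<Sum>y\<in>TT \<Lambda>. if nn x y then g x y else 0)"
    using fin nn0 by (intro add_left_mono sum_mono sum_mono2) (auto simp: finite_TT finite_bdry TT_def)
  also have "\<dots> = (\<Sum>x\<in>TT \<Lambda>. \<Sum>y\<in>TT \<Lambda>. if nn x y then g x y else 0)"
    using fin by (simp add: sum_TT)
  also have "\<dots> = (\<Sum>(x,y)\<in>{(x,y). x \<in> \<Lambda> \<union> bdry \<Lambda> \<and> y \<in> \<Lambda> \<union> bdry \<Lambda> \<and> nn x y}. g x y)"
    using fin by (simp add: pair_sum finite_TT TT_def[symmetric])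
  finally show ?thesis .
qed

lemma C2_cont: "C2_fun f \<Longrightarrow> continuous_on UNIV f"
  unfolding C2_fun_def
proof (elim exE conjE)
  fix f' f'' assume d: "\<forall>s. (f has_real_derivative f' s) (at s)"
  show "continuous_on UNIV f"
    by (intro continuous_at_imp_continuous_on ballI) (use d DERIV_isCont in blast)
qed

lemma sigma_Zg:
  assumes "finite \<Lambda>"
  shows "sigma c \<Lambda> = - (1 / real (card \<Lambda>)) * ln (\<integral>\<phi>. exp (- c * QP \<Lambda> \<phi>) \<partial>leb_on \<Lambda>)"
  unfolding sigma_def by (simp only: sigma_QP[OF assms])

lemma QP_empty: "QP {} \<phi> = 0"
  by (simp add: QP_def PS_def)

theorem lemma4p1:
  fixes V :: "'w \<Rightarrow> 'd::finite site \<Rightarrow> 'd site \<Rightarrow> real \<Rightarrow> real"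
    and B :: "'w \<Rightarrow> 'd site \<Rightarrow> 'd site \<Rightarrow> real"
    and A C2 :: real and u :: "real ^ 'd"
  assumes "A > 0" and "C2 > 0"
    and "\<And>\<omega> x y. nn x y \<Longrightarrow> C2_fun (V \<omega> x y)"
    and "\<And>\<omega> x y s. nn x y \<Longrightarrow> V \<omega> x y (- s) = V \<omega> x y s"
    and "\<And>\<omega> x y. nn x y \<Longrightarrow> V \<omega> x y = V \<omega> y x"
    and "\<And>\<omega> x y. nn x y \<Longrightarrow> B \<omega> x y = B \<omega> y x"
  shows "\<exists>\<beta>0>0. \<forall>\<beta>. 0 < \<beta> \<and> \<beta> < \<beta>0 \<longrightarrow>
           (\<forall>\<Lambda> \<omega>. finite \<Lambda> \<longrightarrow>
             (\<forall>x y s. nn x y \<longrightarrow> A * s\<^sup>2 - B \<omega> x y \<le> V \<omega> x y s \<and> V \<omega> x y s \<le> C2 * s\<^sup>2) \<longrightarrow>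
             Ffun (V \<omega>) \<beta> u \<Lambda>
               \<le> - real (card \<Lambda>) * (sigma (A - \<beta>) \<Lambda> - sigma C2 \<Lambda>)
                 + (\<Sum>(x,y)\<in>{(x,y). x \<in> \<Lambda> \<union> bdry \<Lambda> \<and> y \<in> \<Lambda> \<union> bdry \<Lambda> \<and> nn x y}. B \<omega> x y)
                 - (A - \<beta> - C2) / 2 *
                   (\<Sum>(x,y)\<in>{(x,y). x \<in> \<Lambda> \<union> bdry \<Lambda> \<and> y \<in> \<Lambda> \<union> bdry \<Lambda> \<and> nn x y}. (sdot (x - y) u)\<^sup>2))"
proof (intro exI[of _ A] conjI allI impI)
  show "A > 0" by fact
  fix \<beta> :: real and \<Lambda> :: "'d site set" and \<omega>
  assume \<beta>: "0 < \<beta> \<and> \<beta> < A" and fin: "finite \<Lambda>"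
    and bnd: "\<forall>x y s. nn x y \<longrightarrow> A * s\<^sup>2 - B \<omega> x y \<le> V \<omega> x y s \<and> V \<omega> x y s \<le> C2 * s\<^sup>2"
  define FullB where "FullB = (\<Sum>(x,y)\<in>{(x,y). x \<in> \<Lambda> \<union> bdry \<Lambda> \<and> y \<in> \<Lambda> \<union> bdry \<Lambda> \<and> nn x y}. B \<omega> x y)"
  define FullC where "FullC = (\<Sum>(x,y)\<in>{(x,y). x \<in> \<Lambda> \<union> bdry \<Lambda> \<and> y \<in> \<Lambda> \<union> bdry \<Lambda> \<and> nn x y}. (sdot (x - y) u)\<^sup>2)"
  define Cu where "Cu = PS \<Lambda> (\<lambda>x y. (sdot (x - y) u)\<^sup>2)"
  define Zg where "Zg c = (\<integral>\<phi>. exp (- c * QP \<Lambda> \<phi>) \<partial>leb_on \<Lambda>)" for c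
  have B0: "0 \<le> B \<omega> x y" if "nn x y" for x y
  proof -
    have "A * 0\<^sup>2 - B \<omega> x y \<le> V \<omega> x y 0 \<and> V \<omega> x y 0 \<le> C2 * 0\<^sup>2" using bnd that by blast
    thus ?thesis by simp
  qed
  have AC: "A \<le> C2"
  proof (rule ccontr)
    assume "\<not> A \<le> C2"
    hence d: "A - C2 > 0" by simp
    define i :: 'd where "i = undefined"
    define x :: "'d site" where "x = 0"
    have nxy: "nn x (x + axis i 1)" by (rule nn_axis)
    define b where "b = B \<omega> x (x + axis i 1)"
    define s where "s = sqrt ((\<bar>b\<bar> + 1) / (A - C2))"
    have s2: "s\<^sup>2 = (\<bar>b\<bar> + 1) / (A - C2)" using d by (simp add: s_def)
    have "A * s\<^sup>2 - b \<le> V \<omega> x (x + axis i 1) s \<and> V \<omega> x (x + axis i 1) s \<le> C2 * s\<^sup>2"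
      using bnd nxy unfolding b_def by blast
    hence "A * s\<^sup>2 - b \<le> C2 * s\<^sup>2" by linarith
    hence "(A - C2) * s\<^sup>2 \<le> b" by (simp add: algebra_simps)
    also have "(A - C2) * s\<^sup>2 = \<bar>b\<bar> + 1" using d s2 by simp
    finally show False by simp
  qed
  have main: "Ffun (V \<omega>) \<beta> u \<Lambda> \<le> PS \<Lambda> (B \<omega>) - A * Cu + C2 * Cu + ln (Zg (A - \<beta>)) - ln (Zg C2)"
    unfolding Cu_def Zg_def
  proof (rule main_bound[OF fin _ _ assms(2)])
    show "\<And>x y. nn x y \<Longrightarrow> continuous_on UNIV (V \<omega> x y)" using C2_cont assms(3) by blast
    show "\<And>x y s. nn x y \<Longrightarrow> A * s\<^sup>2 - B \<omega> x y \<le> V \<omega> x y s \<and> V \<omega> x y s \<le> C2 * s\<^sup>2" using bnd by blast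
    show "0 < \<beta>" "\<beta> < A" using \<beta> by auto
  qed
  have Bs: "PS \<Lambda> (B \<omega>) \<le> FullB" unfolding FullB_def by (rule PS_le_full[OF fin B0])
  have Cs: "2 * Cu \<le> FullC" unfolding FullC_def Cu_def
    by (rule PS2_le_full[OF fin]) (auto simp: sdot_diff power2_commute)
  have Cu0: "0 \<le> Cu" unfolding Cu_def by (rule PS_nonneg) simp
  have quad: "- A * Cu + C2 * Cu \<le> - (A - \<beta> - C2) / 2 * FullC"
  proof -
    have "- A * Cu + C2 * Cu = (C2 - A) * Cu" by (simp add: algebra_simps)
    also have "\<dots> \<le> (C2 - A) * (FullC / 2)" using AC Cs by (intro mult_left_mono) auto
    also have "\<dots> \<le> (C2 - A + \<beta>) * (FullC / 2)"
      using \<beta> Cs Cu0 by (intro mult_right_mono) auto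
    finally show ?thesis by (simp add: algebra_simps)
  qed
  have sig: "ln (Zg (A - \<beta>)) - ln (Zg C2) = - real (card \<Lambda>) * (sigma (A - \<beta>) \<Lambda> - sigma C2 \<Lambda>)"
  proof (cases "\<Lambda> = {}")
    case True
    thus ?thesis by (simp add: Zg_def QP_empty)
  next
    case False
    hence "card \<Lambda> > 0" using fin by (simp add: card_gt_0_iff)
    thus ?thesis unfolding sigma_Zg[OF fin] Zg_def by (simp add: algebra_simps)
  qed
  show "Ffun (V \<omega>) \<beta> u \<Lambda>
               \<le> - real (card \<Lambda>) * (sigma (A - \<beta>) \<Lambda> - sigma C2 \<Lambda>)
                 + (\<Sum>(x,y)\<in>{(x,y). x \<in> \<Lambda> \<union> bdry \<Lambda> \<and> y \<in> \<Lambda> \<union> bdry \<Lambda> \<and> nn x y}. B \<omega> x y)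
                 - (A - \<beta> - C2) / 2 *
                   (\<Sum>(x,y)\<in>{(x,y). x \<in> \<Lambda> \<union> bdry \<Lambda> \<and> y \<in> \<Lambda> \<union> bdry \<Lambda> \<and> nn x y}. (sdot (x - y) u)\<^sup>2)"
    using main Bs quad sig unfolding FullB_def[symmetric] FullC_def[symmetric] by linarith
qed


end
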